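(* Given a field $F$ and a positive integer $n$, there is a finite group $H$ such that the group ring $F[H]$ has a subring isomorphic to the matrix algebra $M_n(F)$. *)

theory Defs
  imports "HOL-Algebra.Group"
begin

text \<open>Group ring F[H] of a finite group H (HOL-Algebra structure) over a field 'a:
  elements are functions carrier H \<rightarrow> F, represented as functions vanishing
  outside carrier H; addition pointwise, multiplication is convolution.\<close>

definition grp_ring_carrier :: "('g, 'b) monoid_scheme \<Rightarrow> ('g \<Rightarrow> 'a::field) set" where
  "grp_ring_carrier H = {f. \<forall>x. x \<notin> carrier H \<longrightarrow> f x = 0}"

definition grp_ring_add :: "('g \<Rightarrow> 'a::field) \<Rightarrow> ('g \<Rightarrow> 'a) \<Rightarrow> ('g \<Rightarrow> 'a)" where
  "grp_ring_add f g = (\<lambda>x. f x + g x)"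

definition grp_ring_mult :: "('g, 'b) monoid_scheme \<Rightarrow> ('g \<Rightarrow> 'a::field) \<Rightarrow> ('g \<Rightarrow> 'a) \<Rightarrow> ('g \<Rightarrow> 'a)" where
  "grp_ring_mult H f g =
     (\<lambda>x. if x \<in> carrier H then (\<Sum>y\<in>carrier H. f y * g (inv\<^bsub>H\<^esub> y \<otimes>\<^bsub>H\<^esub> x)) else 0)"

text \<open>A (not necessarily unital) subring of F[H]: contains 0, closed under
  addition, negation and multiplication.\<close>

definition grp_ring_subring :: "('g, 'b) monoid_scheme \<Rightarrow> ('g \<Rightarrow> 'a::field) set \<Rightarrow> bool" where
  "grp_ring_subring H S \<longleftrightarrow>
     S \<subseteq> grp_ring_carrier H \<and> (\<lambda>_. 0) \<in> S \<and>
     (\<forall>f\<in>S. \<forall>g\<in>S. grp_ring_add f g \<in> S \<and> grp_ring_mult H f g \<in> S) \<and>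
     (\<forall>f\<in>S. (\<lambda>x. - f x) \<in> S)"

definition mat_carrier :: "nat \<Rightarrow> (nat \<Rightarrow> nat \<Rightarrow> 'a::field) set" where
  "mat_carrier n = {A. \<forall>i j. \<not> (i < n \<and> j < n) \<longrightarrow> A i j = 0}"

definition mat_add :: "(nat \<Rightarrow> nat \<Rightarrow> 'a::field) \<Rightarrow> (nat \<Rightarrow> nat \<Rightarrow> 'a) \<Rightarrow> (nat \<Rightarrow> nat \<Rightarrow> 'a)" where
  "mat_add A B = (\<lambda>i j. A i j + B i j)"

definition mat_mult :: "nat \<Rightarrow> (nat \<Rightarrow> nat \<Rightarrow> 'a::field) \<Rightarrow> (nat \<Rightarrow> nat \<Rightarrow> 'a) \<Rightarrow> (nat \<Rightarrow> nat \<Rightarrow> 'a)" where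
  "mat_mult n A B = (\<lambda>i j. if i < n \<and> j < n then (\<Sum>k<n. A i k * B k j) else 0)"

end

theory Submission
  imports Defs "HOL-Library.FuncSet"
begin


lemma md_add: "a < n \<Longrightarrow> b < (n::nat) \<Longrightarrow> (a + b) mod n = (if a + b < n then a + b else a + b - n)"
  by (simp add: mod_if)
lemma md_sub: "a < n \<Longrightarrow> b < (n::nat) \<Longrightarrow> (a + n - b) mod n = (if b \<le> a then a - b else a + n - b)"
  by (auto simp add: mod_if)

lemma modneg: "a < (m::nat) \<Longrightarrow> ((m - a) mod m + a) mod m = 0"
proof -
  assume "a < m"
  have "((m - a) mod m + a) mod m = ((m - a) + a) mod m" by (rule mod_add_left_eq)
  also have "\<dots> = 0" using \<open>a < m\<close> by simp
  finally show ?thesis .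
qed

definition Pn :: "nat \<Rightarrow> nat \<Rightarrow> (nat \<Rightarrow> nat) set" where
  "Pn n q = PiE {..<n} (\<lambda>_. {..<q})"
definition GC :: "nat \<Rightarrow> nat \<Rightarrow> ((nat \<Rightarrow> nat) \<times> nat) set" where
  "GC n q = Pn n q \<times> {..<n}"
definition gmul :: "nat \<Rightarrow> nat \<Rightarrow> (nat \<Rightarrow> nat) \<times> nat \<Rightarrow> (nat \<Rightarrow> nat) \<times> nat \<Rightarrow> (nat \<Rightarrow> nat) \<times> nat" where
  "gmul n q x y = (\<lambda>j. if j < n then (fst x j + fst y ((j + snd x) mod n)) mod q else undefined,
                   (snd x + snd y) mod n)"
definition gone :: "nat \<Rightarrow> (nat \<Rightarrow> nat) \<times> nat" where
  "gone n = (\<lambda>j. if j < n then 0 else undefined, 0)"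
definition ginv :: "nat \<Rightarrow> nat \<Rightarrow> (nat \<Rightarrow> nat) \<times> nat \<Rightarrow> (nat \<Rightarrow> nat) \<times> nat" where
  "ginv n q x = (\<lambda>j. if j < n then (q - fst x ((j + (n - snd x) mod n) mod n)) mod q else undefined,
                   (n - snd x) mod n)"
definition zf :: "nat \<Rightarrow> nat \<Rightarrow> (nat \<Rightarrow> nat) \<times> nat \<Rightarrow> (nat \<Rightarrow> nat) \<times> nat \<Rightarrow> (nat \<Rightarrow> nat) \<times> nat" where
  "zf n q y x = (\<lambda>m. if m < n then (fst x ((m + n - snd y) mod n) + q - fst y ((m + n - snd y) mod n)) mod q else undefined,
                   (snd x + n - snd y) mod n)"

lemma GC_iff: "x \<in> GC n q \<longleftrightarrow> (\<forall>j<n. fst x j < q) \<and> (\<forall>j. n \<le> j \<longrightarrow> fst x j = undefined) \<and> snd x < n"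
  by (cases x) (auto simp: GC_def Pn_def PiE_def extensional_def Pi_def)

lemma gmul_closed: "0 < q \<Longrightarrow> 0 < n \<Longrightarrow> x \<in> GC n q \<Longrightarrow> y \<in> GC n q \<Longrightarrow> gmul n q x y \<in> GC n q"
  by (auto simp: GC_iff gmul_def)

lemma gone_closed: "0 < q \<Longrightarrow> 0 < n \<Longrightarrow> gone n \<in> GC n q"
  by (auto simp: GC_iff gone_def)

lemma ginv_closed: "0 < q \<Longrightarrow> 0 < n \<Longrightarrow> x \<in> GC n q \<Longrightarrow> ginv n q x \<in> GC n q"
  by (auto simp: GC_iff ginv_def)

lemma zf_closed: "0 < q \<Longrightarrow> 0 < n \<Longrightarrow> zf n q y x \<in> GC n q"
  by (auto simp: GC_iff zf_def)

lemma gmul_assoc: "0 < q \<Longrightarrow> 0 < n \<Longrightarrow> x \<in> GC n q \<Longrightarrow> y \<in> GC n q \<Longrightarrow> z \<in> GC n q \<Longrightarrow>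
   gmul n q (gmul n q x y) z = gmul n q x (gmul n q y z)"
proof -
  assume q: "0 < q" and n: "0 < n" and x: "x \<in> GC n q" and y: "y \<in> GC n q" and z: "z \<in> GC n q"
  have i: "((j + snd x) mod n + snd y) mod n = (j + (snd x + snd y) mod n) mod n" for j
    by (metis add.assoc mod_add_left_eq mod_add_right_eq)
  show ?thesis
    unfolding gmul_def
    by (auto simp: i mod_add_left_eq mod_add_right_eq add.assoc intro!: ext)
qed

lemma gmul_one: "0 < q \<Longrightarrow> 0 < n \<Longrightarrow> x \<in> GC n q \<Longrightarrow> gmul n q (gone n) x = x"
  by (cases x) (auto simp: GC_iff gmul_def gone_def intro!: ext)

lemma gmul_inv: "0 < q \<Longrightarrow> 0 < n \<Longrightarrow> x \<in> GC n q \<Longrightarrow> gmul n q (ginv n q x) x = gone n"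
proof -
  assume q: "0 < q" and n: "0 < n" and x: "x \<in> GC n q"
  have r: "snd x < n" using x by (simp add: GC_iff)
  have a: "((q - a) mod q + a) mod q = 0" if "a < q" for a
    using that modneg by blast
  have b: "((n - snd x) mod n + snd x) mod n = 0"
    using r modneg by blast
  have c: "fst x ((j + (n - snd x) mod n) mod n) < q" for j
    using x n by (simp add: GC_iff)
  show ?thesis unfolding gmul_def ginv_def gone_def
    using a[OF c] b by (auto intro!: ext simp: add.commute)
qed

lemma gmul_zf: "0 < q \<Longrightarrow> 0 < n \<Longrightarrow> x \<in> GC n q \<Longrightarrow> y \<in> GC n q \<Longrightarrow> gmul n q y (zf n q y x) = x"
proof -
  assume q: "0 < q" and n: "0 < n" and x: "x \<in> GC n q" and y: "y \<in> GC n q"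
  have ry: "snd y < n" and rx: "snd x < n" using x y by (auto simp: GC_iff)
  have i: "((j + snd y) mod n + n - snd y) mod n = j" if "j < n" for j
    using that ry by (simp add: md_add md_sub)
  have i2: "(snd y + (snd x + n - snd y) mod n) mod n = snd x"
    using rx ry by (simp add: md_add md_sub)
  have v: "(fst y j + (fst x j + q - fst y j) mod q) mod q = fst x j" if "j < n" for j
  proof -
    have "fst y j < q" "fst x j < q" using that x y by (auto simp: GC_iff)
    then show ?thesis by (simp add: mod_add_right_eq)
  qed
  show ?thesis
  proof (rule prod_eqI)
    show "fst (gmul n q y (zf n q y x)) = fst x"
      using x by (auto intro!: ext simp: gmul_def zf_def i v GC_iff)
    show "snd (gmul n q y (zf n q y x)) = snd x"
      by (simp add: gmul_def zf_def i2)
  qed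
qed



lemma card_Pn_fix:
  assumes J: "J \<subseteq> {..<n}" and f: "\<And>j. j \<in> J \<Longrightarrow> f j < q"
  shows "card (Pn n q \<inter> {w. \<forall>j\<in>J. w j = f j}) = q ^ (n - card J)"
proof -
  have "Pn n q \<inter> {w. \<forall>j\<in>J. w j = f j} = PiE {..<n} (\<lambda>j. if j \<in> J then {f j} else {..<q})"
    using J f by (auto simp: Pn_def PiE_def Pi_def split: if_splits)
  hence "card (Pn n q \<inter> {w. \<forall>j\<in>J. w j = f j}) = (\<Prod>j<n. card (if j \<in> J then {f j} else {..<q}))"
    by (simp add: card_PiE)
  also have "\<dots> = (\<Prod>j<n. if j \<in> J then 1 else q)"
    by (rule prod.cong) auto
  also have "\<dots> = q ^ card ({..<n} \<inter> - J)"
    by (simp add: prod.If_cases)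
  also have "card ({..<n} \<inter> - J) = n - card J"
  proof -
    have "{..<n} \<inter> - J = {..<n} - J" by auto
    moreover have "finite J" using J finite_subset by blast
    ultimately show ?thesis using J by (simp add: card_Diff_subset Int_absorb2)
  qed
  finally show ?thesis .
qed

lemma card_Pn: "card (Pn n q) = q ^ n"
  using card_Pn_fix[of "{}" n] by simp

lemma card_Pn1: "i < n \<Longrightarrow> b < q \<Longrightarrow> card (Pn n q \<inter> {w. w i = b}) = q ^ (n - 1)"
  using card_Pn_fix[of "{i}" n "\<lambda>_. b" q] by simp

lemma card_Pn2: "i < n \<Longrightarrow> i' < n \<Longrightarrow> i \<noteq> i' \<Longrightarrow> a < q \<Longrightarrow> b < q \<Longrightarrow>
   card (Pn n q \<inter> {w. w i = a \<and> w i' = b}) = q ^ (n - 2)"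
  using card_Pn_fix[of "{i,i'}" n "\<lambda>j. if j = i then a else b" q] by (auto simp: conj_commute numeral_2_eq_2)

lemma finite_Pn: "finite (Pn n q)"
  by (simp add: Pn_def finite_PiE)

lemma sum_key:
  fixes c d :: "'a::field"
  assumes n: "0 < n" and i: "i < n" and i': "i' < n" and b: "b < q" and q0: "(of_nat q :: 'a) \<noteq> 0"
    and c: "c = inverse (of_nat q ^ (n - 1))" and d: "d = inverse (of_nat q ^ n)"
  shows "(\<Sum>w\<in>Pn n q. (c * of_bool (w i = 0) - d) * (c * of_bool (w i' = b) - d))
         = (if i = i' then c * of_bool (b = 0) - d else 0)"
proof -
  have q: "0 < q" using b by simp
  have pt: "(c * of_bool (w i = 0) - d) * (c * of_bool (w i' = b) - d) =
      c * c * of_bool (w i = 0 \<and> w i' = b) - c * d * of_bool (w i = 0) - c * d * of_bool (w i' = b) + d * d" for w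
    by (auto simp: algebra_simps)
  have "(\<Sum>w\<in>Pn n q. (c * of_bool (w i = 0) - d) * (c * of_bool (w i' = b) - d))
     = c * c * of_nat (card (Pn n q \<inter> {w. w i = 0 \<and> w i' = b})) - c * d * of_nat (card (Pn n q \<inter> {w. w i = 0}))
       - c * d * of_nat (card (Pn n q \<inter> {w. w i' = b})) + d * d * of_nat (card (Pn n q))"
    by (simp add: pt sum.distrib sum_subtractf flip: sum_distrib_left add: finite_Pn)
  also have "\<dots> = c * c * of_nat (card (Pn n q \<inter> {w. w i = 0 \<and> w i' = b})) - c * d * of_nat (q ^ (n - 1))
       - c * d * of_nat (q ^ (n - 1)) + d * d * of_nat (q ^ n)"
    using card_Pn1[OF i q] card_Pn1[OF i' b] card_Pn by simp
  also have "\<dots> = (if i = i' then c * of_bool (b = 0) - d else 0)"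
  proof (cases "i = i'")
    case True
    have e: "card (Pn n q \<inter> {w. w i = 0 \<and> w i' = b}) = (if b = 0 then q ^ (n - 1) else 0)"
    proof (cases "b = 0")
      case True
      thus ?thesis using card_Pn1[OF i q] \<open>i = i'\<close> by simp
    next
      case False
      hence "Pn n q \<inter> {w. w i = 0 \<and> w i' = b} = {}" using \<open>i = i'\<close> by auto
      thus ?thesis using False by simp
    qed
    obtain m where m: "n = Suc m" using n by (cases n) auto
    show ?thesis using q0 True unfolding e c d unfolding m
      by (simp add: field_simps)
  next
    case False
    then have nn: "2 \<le> n" using i i' by linarith
    then obtain m where m: "n = Suc (Suc m)" by (metis add_2_eq_Suc le_Suc_ex)
    show ?thesis using False q0 card_Pn2[OF i i' False q b] unfolding c d m
      by (simp add: field_simps)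
  qed
  finally show ?thesis .
qed



lemma idx1: "i < n \<Longrightarrow> j < (n::nat) \<Longrightarrow> (j + n - (j + n - i) mod n) mod n = i"
proof -
  assume a: "i < n" "j < n"
  show ?thesis
  proof (cases "i \<le> j")
    case True
    hence "(j + n - i) mod n = j - i" using a by (simp add: md_sub)
    moreover have "(j + n - (j - i)) mod n = i" using a True by (simp add: md_sub)
    ultimately show ?thesis by simp
  next
    case False
    hence "(j + n - i) mod n = j + n - i" using a by (simp add: md_sub)
    moreover have "(j + n - (j + n - i)) mod n = i" using a False by simp
    ultimately show ?thesis by simp
  qed
qed

lemma idx2: "i < n \<Longrightarrow> j < n \<Longrightarrow> k < (n::nat) \<Longrightarrow> j \<noteq> k \<Longrightarrow> (k + n - (j + n - i) mod n) mod n \<noteq> i"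
proof -
  assume a: "i < n" "j < n" "k < n" "j \<noteq> k"
  define p where "p = (j + n - i) mod n"
  have pl: "p < n" using a by (simp add: p_def)
  have pe: "p = (if i \<le> j then j - i else j + n - i)" using a by (simp add: p_def md_sub)
  have "(k + n - p) mod n = (if p \<le> k then k - p else k + n - p)" using a pl by (simp add: md_sub)
  thus ?thesis unfolding p_def[symmetric] using a pe by (auto split: if_splits)
qed

lemma idx3: "i < n \<Longrightarrow> j < n \<Longrightarrow> l < n \<Longrightarrow> r < (n::nat) \<Longrightarrow>
   ((r + n - (j + n - i) mod n) mod n = (l + n - j) mod n) \<longleftrightarrow> r = (l + n - i) mod n"
proof -
  assume a: "i < n" "j < n" "l < n" "r < n"
  define p where "p = (j + n - i) mod n"
  have pl: "p < n" using a by (simp add: p_def)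
  have pe: "p = (if i \<le> j then j - i else j + n - i)" using a by (simp add: p_def md_sub)
  have e1: "(r + n - p) mod n = (if p \<le> r then r - p else r + n - p)" using a pl by (simp add: md_sub)
  have e2: "(l + n - j) mod n = (if j \<le> l then l - j else l + n - j)" using a by (simp add: md_sub)
  have e3: "(l + n - i) mod n = (if i \<le> l then l - i else l + n - i)" using a by (simp add: md_sub)
  show ?thesis unfolding p_def[symmetric] e1 e2 e3 using a pe by (auto split: if_splits)
qed

lemma modq0: "a < q \<Longrightarrow> b < (q::nat) \<Longrightarrow> ((a + q - b) mod q = 0) \<longleftrightarrow> a = b"
  by (cases "b \<le> a") (auto simp: md_sub)


definition Ec :: "nat \<Rightarrow> nat \<Rightarrow> nat \<Rightarrow> nat \<Rightarrow> (nat \<Rightarrow> nat) \<times> nat \<Rightarrow> 'a::field" where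
  "Ec n q i j x = (if snd x = (j + n - i) mod n
     then inverse (of_nat q ^ (n - 1)) * of_bool (fst x i = 0) - inverse (of_nat q ^ n) else 0)"

lemma KL:
  assumes n: "0 < n" and q: "0 < q" and q0: "(of_nat q :: 'a::field) \<noteq> 0"
    and i: "i < n" and j: "j < n" and k: "k < n" and l: "l < n" and x: "x \<in> GC n q"
  shows "(\<Sum>y\<in>GC n q. (Ec n q i j y :: 'a) * Ec n q k l (zf n q y x)) = (if j = k then Ec n q i l x else 0)"
proof -
  define c :: 'a where "c = inverse (of_nat q ^ (n - 1))"
  define d :: 'a where "d = inverse (of_nat q ^ n)"
  define p where "p = (j + n - i) mod n"
  define i' where "i' = (k + n - p) mod n"
  obtain v r where xv: "x = (v, r)" by (cases x)
  have vr: "\<And>m. m < n \<Longrightarrow> v m < q" "r < n" using x by (auto simp: GC_iff xv)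
  have pl: "p < n" using n by (simp add: p_def)
  have il: "i' < n" using n by (simp add: i'_def)
  define cond where "cond = ((r + n - p) mod n = (l + n - k) mod n)"
  have zfE: "Ec n q k l (zf n q (w, p) x) = (if cond then c * of_bool (w i' = v i') - d else 0)"
    if w: "w \<in> Pn n q" for w
  proof -
    have wl: "w i' < q" using w il by (auto simp: Pn_def)
    have "fst (zf n q (w, p) x) k = (v i' + q - w i') mod q"
      using k by (simp add: zf_def xv i'_def)
    hence "(fst (zf n q (w, p) x) k = 0) = (v i' = w i')"
      using modq0[OF vr(1)[OF il] wl] by simp
    thus ?thesis unfolding Ec_def c_def d_def cond_def by (auto simp: zf_def xv)
  qed
  have "(\<Sum>y\<in>GC n q. (Ec n q i j y :: 'a) * Ec n q k l (zf n q y x))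
      = (\<Sum>w\<in>Pn n q. \<Sum>r'\<in>{..<n}. (Ec n q i j (w, r') :: 'a) * Ec n q k l (zf n q (w, r') x))"
    unfolding GC_def by (simp add: sum.cartesian_product)
  also have "\<dots> = (\<Sum>w\<in>Pn n q. (c * of_bool (w i = 0) - d) * Ec n q k l (zf n q (w, p) x))"
  proof (rule sum.cong[OF refl])
    fix w
    have "(\<Sum>r'\<in>{..<n}. (Ec n q i j (w, r') :: 'a) * Ec n q k l (zf n q (w, r') x))
        = (\<Sum>r'\<in>{..<n}. if r' = p then (c * of_bool (w i = 0) - d) * Ec n q k l (zf n q (w, r') x) else 0)"
      by (rule sum.cong) (auto simp: Ec_def c_def d_def p_def)
    also have "\<dots> = (c * of_bool (w i = 0) - d) * Ec n q k l (zf n q (w, p) x)"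
      using pl by (simp add: sum.delta)
    finally show "(\<Sum>r'\<in>{..<n}. (Ec n q i j (w, r') :: 'a) * Ec n q k l (zf n q (w, r') x))
        = (c * of_bool (w i = 0) - d) * Ec n q k l (zf n q (w, p) x)" .
  qed
  also have "\<dots> = (\<Sum>w\<in>Pn n q. if cond then (c * of_bool (w i = 0) - d) * (c * of_bool (w i' = v i') - d) else 0)"
    by (rule sum.cong[OF refl]) (simp add: zfE)
  also have "\<dots> = (if cond then (\<Sum>w\<in>Pn n q. (c * of_bool (w i = 0) - d) * (c * of_bool (w i' = v i') - d)) else 0)"
    by simp
  also have "\<dots> = (if cond then (if i = i' then c * of_bool (v i' = 0) - d else 0) else 0)"
    using sum_key[OF n i il vr(1)[OF il] q0 c_def d_def] by simp
  also have "\<dots> = (if j = k then Ec n q i l x else 0)"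
  proof (cases "j = k")
    case True
    have ii: "i' = i" using idx1[OF i j] True by (simp add: i'_def p_def)
    have cc: "cond = (r = (l + n - i) mod n)" using idx3[OF i j l vr(2)] True by (simp add: cond_def p_def)
    show ?thesis using True unfolding ii cc by (simp add: Ec_def xv c_def d_def)
  next
    case False
    have "i' \<noteq> i" using idx2[OF i j k False] by (simp add: i'_def p_def)
    thus ?thesis using False by auto
  qed
  finally show ?thesis .
qed



lemma expand4:
  fixes f g :: "nat \<Rightarrow> nat \<Rightarrow> 'b \<Rightarrow> 'a::comm_ring"
  shows "(\<Sum>y\<in>C. (\<Sum>i<n. \<Sum>j<n. f i j y) * (\<Sum>k<n. \<Sum>l<n. g k l y))
     = (\<Sum>i<n. \<Sum>j<n. \<Sum>k<n. \<Sum>l<n. \<Sum>y\<in>C. f i j y * g k l y)"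
proof -
  have "(\<Sum>y\<in>C. (\<Sum>i<n. \<Sum>j<n. f i j y) * (\<Sum>k<n. \<Sum>l<n. g k l y))
     = (\<Sum>y\<in>C. \<Sum>i<n. \<Sum>j<n. \<Sum>k<n. \<Sum>l<n. f i j y * g k l y)"
    by (simp only: sum_distrib_right) (simp only: sum_distrib_left)
  also have "\<dots> = (\<Sum>i<n. \<Sum>y\<in>C. \<Sum>j<n. \<Sum>k<n. \<Sum>l<n. f i j y * g k l y)"
    by (rule sum.swap)
  also have "\<dots> = (\<Sum>i<n. \<Sum>j<n. \<Sum>y\<in>C. \<Sum>k<n. \<Sum>l<n. f i j y * g k l y)"
    by (rule sum.cong[OF refl], rule sum.swap)
  also have "\<dots> = (\<Sum>i<n. \<Sum>j<n. \<Sum>k<n. \<Sum>y\<in>C. \<Sum>l<n. f i j y * g k l y)"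
    by (rule sum.cong[OF refl], rule sum.cong[OF refl], rule sum.swap)
  also have "\<dots> = (\<Sum>i<n. \<Sum>j<n. \<Sum>k<n. \<Sum>l<n. \<Sum>y\<in>C. f i j y * g k l y)"
    by (rule sum.cong[OF refl], rule sum.cong[OF refl], rule sum.cong[OF refl], rule sum.swap)
  finally show ?thesis .
qed

lemma collapse4:
  fixes A B :: "nat \<Rightarrow> nat \<Rightarrow> 'a::comm_ring" and E :: "nat \<Rightarrow> nat \<Rightarrow> 'a"
  shows "(\<Sum>i<n. \<Sum>j<n. \<Sum>k<n. \<Sum>l<n. A i j * B k l * (if j = k then E i l else 0))
     = (\<Sum>i<n. \<Sum>l<n. (\<Sum>k<n. A i k * B k l) * E i l)"
proof -
  have "(\<Sum>i<n. \<Sum>j<n. \<Sum>k<n. \<Sum>l<n. A i j * B k l * (if j = k then E i l else 0))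
     = (\<Sum>i<n. \<Sum>j<n. \<Sum>l<n. A i j * B j l * E i l)"
  proof (rule sum.cong[OF refl], rule sum.cong[OF refl])
    fix i j assume "j \<in> {..<n}"
    have "(\<Sum>k<n. \<Sum>l<n. A i j * B k l * (if j = k then E i l else 0))
       = (\<Sum>k<n. if j = k then (\<Sum>l<n. A i j * B k l * E i l) else 0)"
      by (rule sum.cong) auto
    also have "\<dots> = (\<Sum>l<n. A i j * B j l * E i l)" using \<open>j \<in> {..<n}\<close> by (simp add: sum.delta)
    finally show "(\<Sum>k<n. \<Sum>l<n. A i j * B k l * (if j = k then E i l else 0)) = (\<Sum>l<n. A i j * B j l * E i l)" .
  qed
  also have "\<dots> = (\<Sum>i<n. \<Sum>l<n. \<Sum>j<n. A i j * B j l * E i l)"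
    by (rule sum.cong[OF refl], rule sum.swap)
  also have "\<dots> = (\<Sum>i<n. \<Sum>l<n. (\<Sum>k<n. A i k * B k l) * E i l)"
    by (simp add: sum_distrib_right)
  finally show ?thesis .
qed



lemma exists_q: "\<exists>q::nat. 2 \<le> q \<and> (of_nat q :: 'a::field) \<noteq> 0"
proof (cases "(2::'a) = 0")
  case True
  have "(of_nat 3 :: 'a) = 2 + 1" by simp
  hence "(of_nat 3 :: 'a) = 1" using True by simp
  thus ?thesis by (intro exI[of _ 3]) auto
next
  case False
  thus ?thesis by (intro exI[of _ 2]) auto
qed

theorem lemma3p1:
  fixes n :: nat
  assumes "0 < n"
  shows "\<exists>H :: nat monoid. group H \<and> finite (carrier H) \<and>
           (\<exists>S :: (nat \<Rightarrow> 'a::field) set. grp_ring_subring H S \<and>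
              (\<exists>\<phi>. bij_betw \<phi> (mat_carrier n :: (nat \<Rightarrow> nat \<Rightarrow> 'a) set) S \<and>
                 (\<forall>A\<in>mat_carrier n. \<forall>B\<in>mat_carrier n.
                    \<phi> (mat_add A B) = grp_ring_add (\<phi> A) (\<phi> B) \<and>
                    \<phi> (mat_mult n A B) = grp_ring_mult H (\<phi> A) (\<phi> B))))"
proof -
  note n = assms
  obtain q :: nat where q2: "2 \<le> q" and q0: "(of_nat q :: 'a) \<noteq> 0" using exists_q by blast
  have q: "0 < q" using q2 by simp
  have finC: "finite (GC n q)" by (simp add: GC_def finite_Pn)
  define N where "N = card (GC n q)"
  obtain h where hb: "bij_betw h (GC n q) {0..<N}" using ex_bij_betw_finite_nat[OF finC] N_def by blast
  define g where "g = inv_into (GC n q) h"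
  have gh: "\<And>x. x \<in> (GC n q) \<Longrightarrow> g (h x) = x" using hb by (simp add: g_def bij_betw_def)
  have hg: "\<And>a. a \<in> {0..<N} \<Longrightarrow> h (g a) = a" using hb unfolding g_def
    by (meson bij_betw_inv_into_right)
  have gC: "\<And>a. a \<in> {0..<N} \<Longrightarrow> g a \<in> (GC n q)" using hb unfolding g_def
    by (metis bij_betw_def inv_into_into)
  have hC: "\<And>x. x \<in> (GC n q) \<Longrightarrow> h x \<in> {0..<N}" using hb by (meson bij_betwE)
  define H :: "nat monoid" where
    "H = \<lparr>carrier = {0..<N}, mult = (\<lambda>a b. h (gmul n q (g a) (g b))), one = h (gone n)\<rparr>"
  have cH: "carrier H = {0..<N}" by (simp add: H_def)
  have mH: "\<And>a b. a \<otimes>\<^bsub>H\<^esub> b = h (gmul n q (g a) (g b))" by (simp add: H_def)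
  have oH: "\<one>\<^bsub>H\<^esub> = h (gone n)" by (simp add: H_def)
  have CG: "\<And>x y. x \<in> (GC n q) \<Longrightarrow> y \<in> (GC n q) \<Longrightarrow> gmul n q x y \<in> (GC n q)"
    using gmul_closed[OF q n] by simp
  have grp: "group H"
  proof (rule groupI)
    fix x y assume a: "x \<in> carrier H" "y \<in> carrier H"
    have "g x \<in> (GC n q)" "g y \<in> (GC n q)" using a gC by (auto simp: cH)
    hence "h (gmul n q (g x) (g y)) \<in> {0..<N}" by (intro hC CG)
    thus "x \<otimes>\<^bsub>H\<^esub> y \<in> carrier H" by (simp add: cH mH)
  next
    have "gone n \<in> (GC n q)" using gone_closed[OF q n] by simp
    hence "h (gone n) \<in> {0..<N}" by (rule hC)
    thus "\<one>\<^bsub>H\<^esub> \<in> carrier H" by (simp add: cH oH)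
  next
    fix x y z assume a: "x \<in> carrier H" "y \<in> carrier H" "z \<in> carrier H"
    have c: "g x \<in> (GC n q)" "g y \<in> (GC n q)" "g z \<in> (GC n q)" using a gC by (auto simp: cH)
    have e1: "g (h (gmul n q (g x) (g y))) = gmul n q (g x) (g y)" using c by (intro gh CG)
    have e2: "g (h (gmul n q (g y) (g z))) = gmul n q (g y) (g z)" using c by (intro gh CG)
    show "x \<otimes>\<^bsub>H\<^esub> y \<otimes>\<^bsub>H\<^esub> z = x \<otimes>\<^bsub>H\<^esub> (y \<otimes>\<^bsub>H\<^esub> z)"
      unfolding mH e1 e2 using gmul_assoc[OF q n] c by simp
  next
    fix x assume "x \<in> carrier H"
    thus "\<one>\<^bsub>H\<^esub> \<otimes>\<^bsub>H\<^esub> x = x"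
      using gmul_one[OF q n] gone_closed[OF q n] by (simp add: cH mH oH gh gC hg)
  next
    fix x assume x: "x \<in> carrier H"
    show "\<exists>y\<in>carrier H. y \<otimes>\<^bsub>H\<^esub> x = \<one>\<^bsub>H\<^esub>"
    proof (intro bexI)
      show "h (ginv n q (g x)) \<otimes>\<^bsub>H\<^esub> x = \<one>\<^bsub>H\<^esub>"
        using x gmul_inv[OF q n] ginv_closed[OF q n] gC by (simp add: cH mH oH gh)
      have "ginv n q (g x) \<in> (GC n q)" using x ginv_closed[OF q n] gC by (simp add: cH)
      hence "h (ginv n q (g x)) \<in> {0..<N}" by (rule hC)
      thus "h (ginv n q (g x)) \<in> carrier H" by (simp add: cH)
    qed
  qed
  have invH: "inv\<^bsub>H\<^esub> (h y) \<otimes>\<^bsub>H\<^esub> h x = h (zf n q y x)" if x: "x \<in> (GC n q)" and y: "y \<in> (GC n q)" for x y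
  proof -
    have z: "zf n q y x \<in> (GC n q)" using zf_closed[OF q n] by simp
    have "h x = h y \<otimes>\<^bsub>H\<^esub> h (zf n q y x)"
      using x y z gmul_zf[OF q n] by (simp add: mH gh)
    moreover have "h x \<in> carrier H" "h y \<in> carrier H" "h (zf n q y x) \<in> carrier H"
      using hC x y z by (auto simp: cH)
    ultimately show ?thesis using group.inv_solve_left'[OF grp, of "h (zf n q y x)" "h y" "h x"]
      by simp
  qed
  have conv: "grp_ring_mult H F G (h x) = (\<Sum>y\<in>(GC n q). F (h y) * G (h (zf n q y x)))"
    if x: "x \<in> (GC n q)" for F G :: "nat \<Rightarrow> 'a" and x
  proof -
    have "grp_ring_mult H F G (h x) = (\<Sum>b\<in>{0..<N}. F b * G (inv\<^bsub>H\<^esub> b \<otimes>\<^bsub>H\<^esub> h x))"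
      using x hC by (simp add: grp_ring_mult_def cH)
    also have "\<dots> = (\<Sum>y\<in>(GC n q). F (h y) * G (inv\<^bsub>H\<^esub> (h y) \<otimes>\<^bsub>H\<^esub> h x))"
      by (rule sum.reindex_bij_betw[OF hb, symmetric])
    also have "\<dots> = (\<Sum>y\<in>(GC n q). F (h y) * G (h (zf n q y x)))"
      using x invH by (simp cong: sum.cong)
    finally show ?thesis .
  qed
  define \<phi> :: "(nat \<Rightarrow> nat \<Rightarrow> 'a) \<Rightarrow> nat \<Rightarrow> 'a" where
    "\<phi> A = (\<lambda>a. if a \<in> {0..<N} then (\<Sum>i<n. \<Sum>j<n. A i j * Ec n q i j (g a)) else 0)" for A
  have phih: "\<phi> A (h x) = (\<Sum>i<n. \<Sum>j<n. A i j * Ec n q i j x)" if "x \<in> (GC n q)" for A x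
    using that hC[OF that] by (simp add: \<phi>_def gh)
  have phiout: "\<phi> A a = 0" if "a \<notin> {0..<N}" for A a
    using that by (simp add: \<phi>_def)
  have allh: "P a" if "a \<in> {0..<N}" "\<And>x. x \<in> (GC n q) \<Longrightarrow> P (h x)" for P a
    using that gC hg by metis
  have hom_mult: "\<phi> (mat_mult n A B) = grp_ring_mult H (\<phi> A) (\<phi> B)" for A B
  proof
    fix a
    show "\<phi> (mat_mult n A B) a = grp_ring_mult H (\<phi> A) (\<phi> B) a"
    proof (cases "a \<in> {0..<N}")
      case False
      thus ?thesis by (simp add: phiout grp_ring_mult_def cH)
    next
      case True
      show ?thesis
      proof (rule allh[OF True])
        fix x assume x: "x \<in> (GC n q)"
        have zC: "\<And>y. zf n q y x \<in> (GC n q)" using zf_closed[OF q n] by simp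
        have "grp_ring_mult H (\<phi> A) (\<phi> B) (h x)
           = (\<Sum>y\<in>(GC n q). (\<Sum>i<n. \<Sum>j<n. A i j * Ec n q i j y) * (\<Sum>k<n. \<Sum>l<n. B k l * Ec n q k l (zf n q y x)))"
          unfolding conv[OF x] using x zC by (intro sum.cong refl) (simp add: phih)
        also have "\<dots> = (\<Sum>i<n. \<Sum>j<n. \<Sum>k<n. \<Sum>l<n. \<Sum>y\<in>(GC n q). A i j * Ec n q i j y * (B k l * Ec n q k l (zf n q y x)))"
          by (rule expand4)
        also have "\<dots> = (\<Sum>i<n. \<Sum>j<n. \<Sum>k<n. \<Sum>l<n. A i j * B k l * (if j = k then Ec n q i l x else 0))"
        proof (intro sum.cong refl)
          fix i j k l assume "i \<in> {..<n}" "j \<in> {..<n}" "k \<in> {..<n}" "l \<in> {..<n}"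
          hence "(\<Sum>y\<in>(GC n q). (Ec n q i j y :: 'a) * Ec n q k l (zf n q y x)) = (if j = k then Ec n q i l x else 0)"
            using KL[OF n q q0, of i j k l x] x by simp
          thus "(\<Sum>y\<in>(GC n q). A i j * Ec n q i j y * (B k l * Ec n q k l (zf n q y x))) = A i j * B k l * (if j = k then Ec n q i l x else 0)"
          proof -
            have "(\<Sum>y\<in>GC n q. A i j * Ec n q i j y * (B k l * Ec n q k l (zf n q y x)))
               = (\<Sum>y\<in>GC n q. (A i j * B k l) * (Ec n q i j y * Ec n q k l (zf n q y x)))"
              by (rule sum.cong) (simp_all add: mult_ac)
            also have "\<dots> = (A i j * B k l) * (\<Sum>y\<in>GC n q. Ec n q i j y * Ec n q k l (zf n q y x))"
              by (simp add: sum_distrib_left)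
            finally show ?thesis using \<open>(\<Sum>y\<in>GC n q. (Ec n q i j y :: 'a) * Ec n q k l (zf n q y x)) = (if j = k then Ec n q i l x else 0)\<close>
              by simp
          qed
        qed
        also have "\<dots> = (\<Sum>i<n. \<Sum>l<n. (\<Sum>k<n. A i k * B k l) * Ec n q i l x)"
          by (rule collapse4)
        also have "\<dots> = \<phi> (mat_mult n A B) (h x)"
          using x by (simp add: phih mat_mult_def)
        finally show "\<phi> (mat_mult n A B) (h x) = grp_ring_mult H (\<phi> A) (\<phi> B) (h x)" by simp
      qed
    qed
  qed
  have hom_add: "\<phi> (mat_add A B) = grp_ring_add (\<phi> A) (\<phi> B)" for A B
    by (auto simp: \<phi>_def grp_ring_add_def mat_add_def distrib_right sum.distrib)
  have madd: "mat_add A B \<in> mat_carrier n" if "A \<in> mat_carrier n" "B \<in> mat_carrier n" for A B :: "nat \<Rightarrow> nat \<Rightarrow> 'a"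
    using that by (simp add: mat_carrier_def mat_add_def)
  have mmul: "mat_mult n A B \<in> mat_carrier n" for A B :: "nat \<Rightarrow> nat \<Rightarrow> 'a"
    by (simp add: mat_carrier_def mat_mult_def)
  have mzero: "(\<lambda>i j. 0) \<in> (mat_carrier n :: (nat \<Rightarrow> nat \<Rightarrow> 'a) set)"
    by (simp add: mat_carrier_def)
  have mneg: "(\<lambda>i j. - A i j) \<in> mat_carrier n" if "A \<in> mat_carrier n" for A :: "nat \<Rightarrow> nat \<Rightarrow> 'a"
    using that by (simp add: mat_carrier_def)
  have phizero: "\<phi> (\<lambda>i j. 0) = (\<lambda>_. 0)"
    by (simp add: \<phi>_def fun_eq_iff)
  have phineg: "\<phi> (\<lambda>i j. - A i j) = (\<lambda>x. - \<phi> A x)" for A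
    by (simp add: \<phi>_def fun_eq_iff sum_negf)
  define U :: "nat \<Rightarrow> nat \<Rightarrow> nat \<Rightarrow> nat \<Rightarrow> 'a" where "U k l = (\<lambda>i j. if i = k \<and> j = l then 1 else 0)" for k l
  have UM: "mat_mult n (mat_mult n (U k k) A) (U l l) = (\<lambda>i j. if i = k \<and> j = l then A k l else 0)"
    if "A \<in> mat_carrier n" "k < n" "l < n" for A k l
  proof -
    have 1: "mat_mult n (U k k) A = (\<lambda>i m. if i = k \<and> m < n then A k m else 0)"
      using that by (auto simp: mat_mult_def U_def fun_eq_iff if_distrib[of "\<lambda>x. x * _"] sum.delta cong: if_cong)
    show ?thesis
      using that unfolding 1
      by (auto simp: mat_mult_def U_def fun_eq_iff mat_carrier_def if_distrib[of "\<lambda>x. _ * x"] sum.delta cong: if_cong)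
  qed
  have inj: "inj_on \<phi> (mat_carrier n)"
  proof (rule inj_onI)
    fix A B assume A: "A \<in> mat_carrier n" and B: "B \<in> mat_carrier n" and eq: "\<phi> A = \<phi> B"
    show "A = B"
    proof (intro ext)
      fix k l
      show "A k l = B k l"
      proof (cases "k < n \<and> l < n")
        case False
        thus ?thesis using A B by (auto simp: mat_carrier_def)
      next
        case True
        hence k: "k < n" and l: "l < n" by auto
        define x0 :: "(nat \<Rightarrow> nat) \<times> nat" where "x0 = ((\<lambda>j. if j < n then 1 else undefined), (l + n - k) mod n)"
        have x0C: "x0 \<in> GC n q" using q2 n by (auto simp: x0_def GC_iff)
        have val: "\<phi> (\<lambda>i j. if i = k \<and> j = l then c else 0) (h x0) = c * Ec n q k l x0" for c
        proof -
          have "\<phi> (\<lambda>i j. if i = k \<and> j = l then c else 0) (h x0)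
              = (\<Sum>i<n. if i = k then (\<Sum>j<n. (if j = l then c else 0) * Ec n q k j x0) else 0)"
            unfolding phih[OF x0C] by (intro sum.cong refl) auto
          also have "\<dots> = c * Ec n q k l x0" using k l by (simp add: sum.delta if_distrib[of "\<lambda>x. x * _"] cong: if_cong)
          finally show ?thesis .
        qed
        have E0: "Ec n q k l x0 \<noteq> (0::'a)"
          using q0 by (simp add: Ec_def x0_def k)
        have "\<phi> (mat_mult n (mat_mult n (U k k) A) (U l l)) = \<phi> (mat_mult n (mat_mult n (U k k) B) (U l l))"
          by (simp add: hom_mult eq)
        hence "\<phi> (\<lambda>i j. if i = k \<and> j = l then A k l else 0) (h x0) = \<phi> (\<lambda>i j. if i = k \<and> j = l then B k l else 0) (h x0)"
          using UM[OF A k l] UM[OF B k l] by simp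
        thus ?thesis using E0 by (simp add: val)
      qed
    qed
  qed
  define S where "S = \<phi> ` mat_carrier n"
  have sub: "grp_ring_subring H S"
    unfolding grp_ring_subring_def
  proof (intro conjI ballI)
    show "S \<subseteq> grp_ring_carrier H"
      by (auto simp: S_def grp_ring_carrier_def cH phiout)
    show "(\<lambda>_. 0) \<in> S" unfolding S_def using mzero phizero by (metis image_eqI)
    fix f g assume "f \<in> S" "g \<in> S"
    then obtain A B where A: "A \<in> mat_carrier n" "f = \<phi> A" and B: "B \<in> mat_carrier n" "g = \<phi> B"
      by (auto simp: S_def)
    show "grp_ring_add f g \<in> S" unfolding S_def A(2) B(2) hom_add[symmetric]
      using A(1) B(1) madd by blast
    show "grp_ring_mult H f g \<in> S" unfolding S_def A(2) B(2) hom_mult[symmetric]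
      using mmul by blast
  next
    fix f assume "f \<in> S"
    then obtain A where A: "A \<in> mat_carrier n" "f = \<phi> A" by (auto simp: S_def)
    show "(\<lambda>x. - f x) \<in> S" using A mneg phineg unfolding S_def by (metis image_eqI)
  qed
  have bij: "bij_betw \<phi> (mat_carrier n) S"
    using inj by (simp add: bij_betw_def S_def)
  show ?thesis
    by (intro exI[of _ H] conjI grp exI[of _ S] sub exI[of _ \<phi>] bij ballI)
       (simp_all add: cH hom_add hom_mult)
qed


end
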